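(* Suppose that $X$ is a metric space containing at most $k$ pairwise disjoint cones, that is, $|I|\le k$ for every family $(C(x_i,y_i))_{i\in I}$ of pairwise disjoint cones in $X$. Then $\mathrm{rk}(A)\le\frac12 k$ for all $A\in\mathscr A(X)$.
   Context: $I(x,y)=\{v: d(x,v)+d(v,y)=d(x,y)\}$, $C(x,v)=\{y\in X: v\in I(x,y)\}$. For $f\colon X\to\mathbb R$, $A(f)$ is the set of unordered pairs $\{x,y\}$ ($x=y$ allowed) with $f(x)+f(y)=d(x,y)$; $\Delta(X)=\{f: f(x)+f(y)\ge d(x,y)\ \forall x,y\}$; $\mathscr A(X)=\{A(f): f\in\Delta(X),\ \bigcup A(f)=X\}$. For $A\in\mathscr A(X)$, $\mathrm{rk}(A)$ is the dimension of the affine space $H(A)=\{g\in\mathbb R^X: g(x)+g(y)=d(x,y)\ \forall\{x,y\}\in A\}$. *)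

theory Defs
  imports Complex_Main "HOL-Library.Extended_Nat"
begin

text \<open>The metric space X is the whole type 'a (class metric_space), with d = dist.\<close>

definition interval :: "'a::metric_space \<Rightarrow> 'a \<Rightarrow> 'a set" where
  "interval x y = {v. dist x v + dist v y = dist x y}"

definition cone :: "'a::metric_space \<Rightarrow> 'a \<Rightarrow> 'a set" where
  "cone x v = {y. v \<in> interval x y}"

text \<open>Unordered pairs {x,y} (x = y allowed) are represented as sets {x,y}.\<close>
definition Apairs :: "('a::metric_space \<Rightarrow> real) \<Rightarrow> 'a set set" where
  "Apairs f = {{x, y} | x y. f x + f y = dist x y}"

definition Delta :: "('a::metric_space \<Rightarrow> real) set" where
  "Delta = {f. \<forall>x y. f x + f y \<ge> dist x y}"

definition scrA :: "'a::metric_space set set set" where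
  "scrA = {Apairs f | f. f \<in> Delta \<and> \<Union>(Apairs f) = UNIV}"

definition H :: "'a::metric_space set set \<Rightarrow> ('a \<Rightarrow> real) set" where
  "H A = {g. \<forall>x y. {x, y} \<in> A \<longrightarrow> g x + g y = dist x y}"

definition lin_indep :: "('a \<Rightarrow> real) set \<Rightarrow> bool" where
  "lin_indep B \<longleftrightarrow> finite B \<and>
     (\<forall>c. (\<lambda>x. \<Sum>b\<in>B. c b * b x) = (\<lambda>x. 0) \<longrightarrow> (\<forall>b\<in>B. c b = 0))"

text \<open>Dimension of the affine space H(A): dimension (possibly infinite) of its
  direction space {g - h | g h in H(A)}, i.e. the supremum of the sizes of
  finite linearly independent subsets.\<close>
definition rk :: "'a::metric_space set set \<Rightarrow> enat" where
  "rk A = Sup {enat (card B) | B. B \<subseteq> {g - h | g h. g \<in> H A \<and> h \<in> H A} \<and> lin_indep B}"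

end

theory Submission
  imports Defs "HOL-Library.Function_Algebras"
begin

lemma sum_fun_apply: "(\<Sum>i\<in>I. F i) x = (\<Sum>i\<in>I. (F i) x :: real)"
  by (induction I rule: infinite_finite_induct) auto

definition fscale :: "real \<Rightarrow> ('a \<Rightarrow> real) \<Rightarrow> ('a \<Rightarrow> real)" where
  "fscale r f = (\<lambda>x. r * f x)"

interpretation fvs: vector_space "fscale :: real \<Rightarrow> ('a \<Rightarrow> real) \<Rightarrow> _"
  by unfold_locales (auto simp: fscale_def fun_eq_iff algebra_simps)

lemma memApairs: "{a, b} \<in> Apairs f \<longleftrightarrow> f a + f b = dist a b"
  unfolding Apairs_def
  by (auto simp: doubleton_eq_iff add.commute dist_commute)

lemma partner:
  assumes "\<Union>(Apairs f) = UNIV"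
  shows "\<exists>w. {z, w} \<in> Apairs f"
proof -
  have "z \<in> \<Union>(Apairs f)" using assms by auto
  then obtain S where S: "S \<in> Apairs f" "z \<in> S" by auto
  then obtain x y where "S = {x, y}" unfolding Apairs_def by auto
  with S show ?thesis by (auto simp: insert_commute)
qed

lemma conekey:
  assumes f: "f \<in> Delta" "\<Union>(Apairs f) = UNIV"
    and xy: "{x, y} \<in> Apairs f" and z: "z \<in> cone x y"
  shows "\<exists>w. {z, w} \<in> Apairs f \<and> {y, w} \<in> Apairs f"
proof -
  obtain w where w: "{z, w} \<in> Apairs f" using partner[OF f(2)] by blast
  have e1: "f x + f y = dist x y" using xy memApairs by blast
  have e2: "f z + f w = dist z w" using w memApairs by blast
  have c: "dist x y + dist y z = dist x z" using z unfolding cone_def interval_def by auto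
  have d1: "f x + f z \<ge> dist x z" using f(1) unfolding Delta_def by auto
  have d2: "f y + f w \<ge> dist y w" using f(1) unfolding Delta_def by auto
  have t: "dist z w \<le> dist z y + dist y w" by (rule dist_triangle)
  have "f y + f w = dist y w" using e1 e2 c d1 d2 t by (simp add: dist_commute)
  with w show ?thesis using memApairs by blast
qed

lemma my_sum_eq_single:
  assumes "a \<in> A" "\<And>x. x \<in> A \<Longrightarrow> x \<noteq> a \<Longrightarrow> g x = (0::real)" and fin: "finite A"
  shows "sum g A = g a"
proof -
  have "sum g A = g a + sum g (A - {a})" by (rule sum.remove[OF fin assms(1)])
  also have "sum g (A - {a}) = 0" using assms(2) by (intro sum.neutral) auto
  finally show ?thesis by simp
qed

theorem proposition5p3:
  fixes k :: nat
  assumes "\<forall>P :: ('a::metric_space \<times> 'a) set.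
             (\<forall>p\<in>P. \<forall>q\<in>P. p \<noteq> q \<longrightarrow>
                cone (fst p) (snd p) \<inter> cone (fst q) (snd q) = {})
             \<longrightarrow> finite P \<and> card P \<le> k"
  shows "\<forall>A \<in> (scrA :: 'a set set set). 2 * rk A \<le> enat k"
proof
  fix A :: "'a set set"
  assume "A \<in> scrA"
  then obtain f where f: "f \<in> Delta" "\<Union>(Apairs f) = UNIV" and Af: "A = Apairs f"
    unfolding scrA_def by auto
  have memA: "{a, b} \<in> A \<longleftrightarrow> f a + f b = dist a b" for a b
    using memApairs Af by blast
  have part: "\<exists>w. {z, w} \<in> A" for z using partner[OF f(2)] Af by blast
  have ck: "\<exists>w. {z, w} \<in> A \<and> {y, w} \<in> A" if "{x, y} \<in> A" "z \<in> cone x y" for x y z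
    using conekey[OF f] that Af by blast
  have bound: "2 * card B \<le> k"
    if B: "B \<subseteq> {g - h | g h. g \<in> H A \<and> h \<in> H A}" "lin_indep B" for B
  proof -
    have D: "b x + b y = 0" if bB: "b \<in> B" and xyA: "{x, y} \<in> A" for b x y
    proof -
      obtain g h where "b = g - h" "g \<in> H A" "h \<in> H A" using B(1) bB by blast
      then show ?thesis using xyA unfolding H_def by (auto simp: algebra_simps)
    qed
    define v where "v z = (\<lambda>b. if b \<in> B then b z else (0::real))" for z
    have vneg: "v x = - v y" if "{x, y} \<in> A" for x y
      using D[OF _ that] by (auto simp: v_def fun_eq_iff eq_neg_iff_add_eq_0)
    have vcone: "v z = v y" if hh: "{x, y} \<in> A" "z \<in> cone x y" for x y z
    proof -
      obtain w where "{z, w} \<in> A" "{y, w} \<in> A" using ck[OF hh] by blast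
      then show ?thesis using vneg by metis
    qed
    define Q where "Q = {v z | z. v z \<noteq> 0}"
    have Qneg: "- q \<in> Q" if qQ: "q \<in> Q" for q
    proof -
      obtain z where z: "q = v z" "v z \<noteq> 0" using qQ Q_def by auto
      obtain w where "{z, w} \<in> A" using part by blast
      hence "{w, z} \<in> A" by (simp add: insert_commute)
      hence "v w = - q" using vneg z by auto
      moreover have "v w \<noteq> 0" using calculation z by (metis neg_equal_0_iff_equal)
      ultimately show ?thesis unfolding Q_def by (metis (mono_tags, lifting) mem_Collect_eq)
    qed
    define p where "p q = (SOME z. v z = q)" for q
    have pq: "v (p q) = q" if "q \<in> Q" for q
    proof -
      have "\<exists>z. v z = q" using that Q_def by auto
      thus ?thesis unfolding p_def by (rule someI_ex)
    qed
    define xq where "xq q = (SOME x. {x, p q} \<in> A)" for q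
    have xq: "{xq q, p q} \<in> A" for q
    proof -
      obtain w where "{p q, w} \<in> A" using part by blast
      hence "\<exists>x. {x, p q} \<in> A" by (auto simp: insert_commute)
      thus ?thesis unfolding xq_def by (rule someI_ex)
    qed
    define P where "P = (\<lambda>q. (xq q, p q)) ` Q"
    have inj: "inj_on (\<lambda>q. (xq q, p q)) Q"
      by (rule inj_onI) (metis pq prod.inject)
    have conesub: "cone (xq q) (p q) \<subseteq> {z. v z = q}" if "q \<in> Q" for q
      using vcone[OF xq] pq[OF that] by auto
    have "\<forall>p1\<in>P. \<forall>p2\<in>P. p1 \<noteq> p2 \<longrightarrow>
                cone (fst p1) (snd p1) \<inter> cone (fst p2) (snd p2) = {}"
    proof (intro ballI impI)
      fix p1 p2 assume "p1 \<in> P" "p2 \<in> P" "p1 \<noteq> p2"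
      then obtain q1 q2 where "q1 \<in> Q" "q2 \<in> Q" "p1 = (xq q1, p q1)" "p2 = (xq q2, p q2)"
        "q1 \<noteq> q2" unfolding P_def by auto
      then show "cone (fst p1) (snd p1) \<inter> cone (fst p2) (snd p2) = {}"
        using conesub[of q1] conesub[of q2] by auto
    qed
    hence "finite P \<and> card P \<le> k" using assms by blast
    hence finQ: "finite Q" and cardQ: "card Q \<le> k"
      using inj finite_imageD card_image unfolding P_def by metis+
    define s where "s q = (SOME b. q b \<noteq> 0)" for q :: "('a \<Rightarrow> real) \<Rightarrow> real"
    have s_neg: "s (- q) = s q" for q
    proof -
      have "(\<lambda>b. (- q) b \<noteq> 0) = (\<lambda>b. q b \<noteq> 0)" by auto
      thus ?thesis unfolding s_def by simp
    qed
    have s_nz: "q (s q) \<noteq> 0" if "q \<noteq> 0" for q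
    proof -
      have "\<exists>b. q b \<noteq> 0" using that by (auto simp: fun_eq_iff)
      thus ?thesis unfolding s_def by (rule someI_ex)
    qed
    have Q0: "0 \<notin> Q" unfolding Q_def by auto
    define Y where "Y = {q \<in> Q. q (s q) > 0}"
    have QY: "Q = Y \<union> uminus ` Y"
    proof
      show "Q \<subseteq> Y \<union> uminus ` Y"
      proof
        fix q assume q: "q \<in> Q"
        hence "q \<noteq> 0" using Q0 by auto
        hence "q (s q) \<noteq> 0" by (rule s_nz)
        show "q \<in> Y \<union> uminus ` Y"
        proof (cases "q (s q) > 0")
          case True thus ?thesis using q Y_def by auto
        next
          case False
          hence "(- q) (s (- q)) > 0" using \<open>q (s q) \<noteq> 0\<close> by (simp add: s_neg)
          hence "- q \<in> Y" using Qneg[OF q] Y_def by auto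
          thus ?thesis by (metis UnI2 image_eqI minus_minus)
        qed
      qed
      show "Y \<union> uminus ` Y \<subseteq> Q" using Qneg Y_def by auto
    qed
    have YdisJ: "Y \<inter> uminus ` Y = {}"
      using s_neg unfolding Y_def by auto
    have finY: "finite Y" using finQ Y_def by auto
    have "card Q = card Y + card (uminus ` Y)"
      using QY YdisJ finY by (simp add: card_Un_disjoint)
    also have "card (uminus ` Y) = card Y"
      by (rule card_image) (simp add: inj_on_def)
    finally have cQY: "card Q = 2 * card Y" by simp
    define \<phi> where "\<phi> q = (\<lambda>z. if v z = q then 1 else if v z = - q then -1 else (0::real))" for q
    have rep: "b z = (\<Sum>q\<in>Y. q b * \<phi> q z)" if b: "b \<in> B" for b z
    proof (cases "v z = 0")
      case True
      have "b z = v z b" using b v_def by simp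
      moreover have "\<phi> q z = 0" if "q \<in> Y" for q
        using that True Q0 unfolding \<phi>_def Y_def by (auto simp: neg_equal_0_iff_equal)
      ultimately show ?thesis using True by simp
    next
      case False
      hence vQ: "v z \<in> Q" unfolding Q_def by auto
      have bz: "b z = v z b" using b v_def by simp
      show ?thesis
      proof (cases "v z \<in> Y")
        case True
        have "(\<Sum>q\<in>Y. q b * \<phi> q z) = v z b * \<phi> (v z) z"
        proof (rule my_sum_eq_single[OF True])
          fix q assume "q \<in> Y" "q \<noteq> v z"
          moreover have "v z \<noteq> - q" using \<open>q \<in> Y\<close> True YdisJ
            by (metis disjoint_iff image_eqI minus_minus)
          ultimately show "q b * \<phi> q z = 0" unfolding \<phi>_def by auto
        qed (rule finY)
        thus ?thesis using bz unfolding \<phi>_def by simp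
      next
        case False
        hence mY: "- v z \<in> Y" using vQ QY by (metis UnE imageE minus_minus)
        have "(\<Sum>q\<in>Y. q b * \<phi> q z) = (- v z) b * \<phi> (- v z) z"
        proof (rule my_sum_eq_single[OF mY])
          fix q assume "q \<in> Y" "q \<noteq> - v z"
          moreover have "v z \<noteq> q" using \<open>q \<in> Y\<close> False by auto
          ultimately show "q b * \<phi> q z = 0" unfolding \<phi>_def by auto
        qed (rule finY)
        moreover have "v z \<noteq> - v z"
        proof
          assume h: "v z = - v z"
          obtain c where c: "v z c \<noteq> 0" using \<open>v z \<noteq> 0\<close> by (auto simp: fun_eq_iff)
          have "v z c = (- v z) c" by (rule arg_cong[OF h, of "\<lambda>f. f c"])
          thus False using c by simp
        qed
        ultimately show ?thesis using bz unfolding \<phi>_def by simp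
      qed
    qed
    have sp: "B \<subseteq> fvs.span (\<phi> ` Y)"
    proof
      fix b assume b: "b \<in> B"
      have "b = (\<Sum>q\<in>Y. fscale (q b) (\<phi> q))"
        by (rule ext) (simp add: sum_fun_apply fscale_def rep[OF b])
      also have "\<dots> \<in> fvs.span (\<phi> ` Y)"
        by (intro fvs.span_sum fvs.span_scale fvs.span_base) auto
      finally show "b \<in> fvs.span (\<phi> ` Y)" .
    qed
    have ind: "fvs.independent B"
    proof -
      have "finite B" using B(2) lin_indep_def by blast
      moreover have "\<forall>c. (\<Sum>v\<in>B. fscale (c v) v) = 0 \<longrightarrow> (\<forall>v\<in>B. c v = 0)"
      proof (intro allI impI)
        fix c assume "(\<Sum>v\<in>B. fscale (c v) v) = 0"
        hence "(\<lambda>x. \<Sum>b\<in>B. c b * b x) = (\<lambda>x. 0)"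
          by (simp add: fun_eq_iff sum_fun_apply fscale_def)
        thus "\<forall>v\<in>B. c v = 0" using B(2) lin_indep_def by blast
      qed
      ultimately show ?thesis by (intro fvs.independent_if_scalars_zero) auto
    qed
    have "card B \<le> card (\<phi> ` Y)"
      using fvs.independent_span_bound[OF _ ind sp] finY by blast
    also have "\<dots> \<le> card Y" using finY card_image_le by blast
    finally show ?thesis using cQY cardQ by linarith
  qed
  have "rk A \<le> enat (k div 2)"
    unfolding rk_def
  proof (rule Sup_least)
    fix x assume "x \<in> {enat (card B) |B. B \<subseteq> {g - h |g h. g \<in> H A \<and> h \<in> H A} \<and> lin_indep B}"
    then obtain B where "x = enat (card B)" "B \<subseteq> {g - h |g h. g \<in> H A \<and> h \<in> H A}" "lin_indep B"
      by blast
    then have "2 * card B \<le> k" using bound by blast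
    then have "card B \<le> k div 2" by linarith
    then show "x \<le> enat (k div 2)" using \<open>x = enat (card B)\<close> by simp
  qed
  hence "2 * rk A \<le> 2 * enat (k div 2)"
    by (simp add: mult_left_mono)
  also have "\<dots> \<le> enat k" by (simp add: numeral_eq_enat)
  finally show "2 * rk A \<le> enat k" .
qed

end
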